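(* For every $n \geq 2$ and every $i \in \{1,\ldots,n\}$, if the set of arrangements in $\{d_{n1}\}$ with first entry $i$ is nonempty, then it has exactly $Der_{n-2}$ elements.
   Context: A linear arrangement of $\{1,\ldots,n\}$ is a sequence $a_1\cdots a_n$ in which each of $1,\ldots,n$ appears exactly once. It contains the pattern $ij$ if $a_t=i$ and $a_{t+1}=j$ for some $t$; otherwise it avoids it. $\{d_{n1}\}$ is the set of linear arrangements of $\{1,\ldots,n\}$ that avoid all of the patterns $12, 23, \ldots, (n-1)n$ and contain the pattern $n1$. $Der_m$ is the number of permutations of $\{1,\ldots,m\}$ with no fixed point ($Der_0=1$). *)

theory Defs
  imports "HOL-Combinatorics.Permutations"
begin

definition linear_arrangement :: "nat \<Rightarrow> nat list \<Rightarrow> bool" where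
  "linear_arrangement n xs \<longleftrightarrow> distinct xs \<and> set xs = {1..n}"

definition contains_pattern :: "nat list \<Rightarrow> nat \<Rightarrow> nat \<Rightarrow> bool" where
  "contains_pattern xs i j \<longleftrightarrow> (\<exists>t. Suc t < length xs \<and> xs ! t = i \<and> xs ! Suc t = j)"

definition d_n1 :: "nat \<Rightarrow> nat list set" where
  "d_n1 n = {xs. linear_arrangement n xs
                 \<and> (\<forall>k\<in>{1..<n}. \<not> contains_pattern xs k (Suc k))
                 \<and> contains_pattern xs n 1}"

definition Der :: "nat \<Rightarrow> nat" where
  "Der m = card {p. p permutes {1..m} \<and> (\<forall>x\<in>{1..m}. p x \<noteq> x)}"

end

theory Submission
  imports Defs
begin


definition adj :: "nat list \<Rightarrow> (nat \<times> nat) set" where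
  "adj xs = set (zip xs (tl xs))"

lemma adj_Nil[simp]: "adj [] = {}" by (simp add: adj_def)
lemma adj_Cons: "adj (x # xs) = (if xs = [] then {} else insert (x, hd xs) (adj xs))"
  by (cases xs) (auto simp: adj_def)
lemma adj_single[simp]: "adj [x] = {}" by (simp add: adj_def)
lemma adj_CC[simp]: "adj (x # y # ys) = insert (x, y) (adj (y # ys))"
  by (simp add: adj_def)

lemma adj_append: "adj (us @ vs) = adj us \<union> adj vs \<union> (if us = [] \<or> vs = [] then {} else {(last us, hd vs)})"
proof (induction us)
  case Nil then show ?case by simp
next
  case (Cons u us) then show ?case by (cases us; cases vs) (auto simp: adj_Cons)
qed

lemma adj_decomp: "(a,b) \<in> adj xs \<Longrightarrow> \<exists>us vs. xs = us @ a # b # vs"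
proof (induction xs)
  case Nil then show ?case by simp
next
  case (Cons x xs)
  show ?case
  proof (cases "(a,b) = (x, hd xs) \<and> xs \<noteq> []")
    case True
    then have "x # xs = [] @ a # b # tl xs" by auto
    then show ?thesis by blast
  next
    case False
    with Cons.prems have "(a,b) \<in> adj xs" by (auto simp: adj_Cons split: if_splits)
    with Cons.IH obtain us vs where "xs = us @ a # b # vs" by blast
    then have "x # xs = (x # us) @ a # b # vs" by simp
    then show ?thesis by blast
  qed
qed

lemma adj_set: "(a,b) \<in> adj xs \<Longrightarrow> a \<in> set xs \<and> b \<in> set xs"
proof -
  assume "(a,b) \<in> adj xs"
  then obtain us vs where "xs = us @ a # b # vs" using adj_decomp by blast
  then show ?thesis by simp
qed

lemma adj_map: "adj (map f xs) = (\<lambda>(a,b). (f a, f b)) ` adj xs"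
  by (induction xs) (auto simp: adj_Cons hd_map)

lemma adj_hd: "distinct xs \<Longrightarrow> (a,b) \<in> adj xs \<Longrightarrow> b \<noteq> hd xs"
proof -
  assume d: "distinct xs" and ab: "(a,b) \<in> adj xs"
  then obtain us vs where "xs = us @ a # b # vs" using adj_decomp by blast
  with d show ?thesis by (cases us) auto
qed

lemma adj_neq: "distinct xs \<Longrightarrow> (a,b) \<in> adj xs \<Longrightarrow> a \<noteq> b"
proof -
  assume "distinct xs" "(a,b) \<in> adj xs"
  moreover then obtain us vs where "xs = us @ a # b # vs" using adj_decomp by blast
  ultimately show ?thesis by auto
qed

lemma adj_pred_unique: "distinct xs \<Longrightarrow> (a,b) \<in> adj xs \<Longrightarrow> (a',b) \<in> adj xs \<Longrightarrow> a = a'"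
proof (induction xs)
  case Nil then show ?case by simp
next
  case (Cons x xs)
  show ?case
  proof (cases xs)
    case Nil then show ?thesis using Cons by simp
  next
    case (Cons y ys)
    have d: "distinct xs" "x \<notin> set xs" using Cons.prems by auto
    have e: "adj (x # xs) = insert (x, y) (adj xs)" using Cons by simp
    show ?thesis
    proof (cases "(a,b) = (x,y)")
      case True
      then show ?thesis using Cons.prems e adj_hd[OF d(1), of a' b] Cons adj_set[of a' b xs] d by auto
    next
      case False
      then have ab: "(a,b) \<in> adj xs" using Cons.prems e by auto
      show ?thesis
      proof (cases "(a',b) = (x,y)")
        case True
        then show ?thesis using ab adj_hd[OF d(1), of a b] Cons by auto
      next
        case False
        then have "(a',b) \<in> adj xs" using Cons.prems e by auto
        then show ?thesis using Cons.IH d ab by blast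
      qed
    qed
  qed
qed

lemma adj_succ_unique: "distinct xs \<Longrightarrow> (a,b) \<in> adj xs \<Longrightarrow> (a,b') \<in> adj xs \<Longrightarrow> b = b'"
proof (induction xs)
  case Nil then show ?case by simp
next
  case (Cons x xs)
  show ?case
  proof (cases xs)
    case Nil then show ?thesis using Cons by simp
  next
    case (Cons y ys)
    have d: "distinct xs" "x \<notin> set xs" using Cons.prems by auto
    have e: "adj (x # xs) = insert (x, y) (adj xs)" using Cons by simp
    show ?thesis
    proof (cases "(a,b) = (x,y)")
      case True
      then show ?thesis using Cons.prems e Cons adj_set[of a b' xs] d by auto
    next
      case False
      then have ab: "(a,b) \<in> adj xs" using Cons.prems e by auto
      show ?thesis
      proof (cases "(a,b') = (x,y)")
        case True
        then show ?thesis using ab adj_set[of a b xs] d by auto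
      next
        case False
        then have "(a,b') \<in> adj xs" using Cons.prems e by auto
        then show ?thesis using Cons.IH d ab by blast
      qed
    qed
  qed
qed

lemma contains_adj: "contains_pattern xs i j \<longleftrightarrow> (i,j) \<in> adj xs"
proof
  assume "contains_pattern xs i j"
  then obtain t where t: "Suc t < length xs" "xs ! t = i" "xs ! Suc t = j" unfolding contains_pattern_def by blast
  have "(xs ! t, tl xs ! t) \<in> set (zip xs (tl xs))"
    using t(1) by (auto simp: set_zip intro!: exI[of _ t])
  then show "(i,j) \<in> adj xs" using t by (simp add: adj_def nth_tl)
next
  assume "(i,j) \<in> adj xs"
  then have "\<exists>t. t < length xs - 1 \<and> xs ! t = i \<and> tl xs ! t = j"
    unfolding adj_def set_zip by auto
  then obtain t where "t < length xs - 1" "xs ! t = i" "tl xs ! t = j"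
    by blast
  then show "contains_pattern xs i j" unfolding contains_pattern_def
    by (auto simp: nth_tl intro!: exI[of _ t])
qed

definition repl :: "nat \<Rightarrow> nat list \<Rightarrow> nat list \<Rightarrow> nat list" where
  "repl a ys xs = concat (map (\<lambda>x. if x = a then ys else [x]) xs)"

lemma repl_notin: "a \<notin> set xs \<Longrightarrow> repl a ys xs = xs"
  by (induction xs) (auto simp: repl_def)

lemma repl_split: "a \<notin> set us \<Longrightarrow> a \<notin> set vs \<Longrightarrow> repl a ys (us @ a # vs) = us @ ys @ vs"
  by (simp add: repl_def repl_notin[unfolded repl_def])

lemma distinct_split: "distinct xs \<Longrightarrow> a \<in> set xs \<Longrightarrow> \<exists>us vs. xs = us @ a # vs \<and> a \<notin> set us \<and> a \<notin> set vs"
proof -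
  assume d: "distinct xs" and a: "a \<in> set xs"
  from split_list[OF a] obtain us vs where "xs = us @ a # vs" by blast
  with d show ?thesis by auto
qed


definition derset :: "nat set \<Rightarrow> (nat \<Rightarrow> nat) set" where
  "derset A = {p. p permutes A \<and> (\<forall>x\<in>A. p x \<noteq> x)}"

lemma Der_derset: "Der m = card (derset {1..m})"
  by (simp add: Der_def derset_def)

lemma finite_derset: "finite A \<Longrightarrow> finite (derset A)"
  unfolding derset_def by (rule finite_subset[OF _ finite_permutations]) auto

lemma card_derset: "finite A \<Longrightarrow> card (derset A) = Der (card A)"
proof -
  assume "finite A"
  then obtain h where h: "bij_betw h {1..card A} A" using ex_bij_betw_nat_finite_1 by blast
  from bij_betw_derangements[OF h] have "card (derset {1..card A}) = card (derset A)"
    unfolding derset_def by (rule bij_betw_same_card)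
  then show ?thesis by (simp add: Der_derset)
qed

lemma Der_0: "Der 0 = 1"
proof -
  have "derset {1..0} = {id}" by (auto simp: derset_def)
  then show ?thesis by (simp add: Der_derset)
qed

lemma Der_1: "Der 1 = 0"
proof -
  have "derset {1..1} = {}" by (auto simp: derset_def)
  then show ?thesis by (simp add: Der_derset)
qed

lemma Der_rec: "Der (Suc (Suc k)) = Suc k * (Der (Suc k) + Der k)"
proof -
  define N where "N = Suc (Suc k)"
  define B where "B = {1..Suc k}"
  define A where "A = {1..N}"
  have AB: "A = insert N B" "N \<notin> B" unfolding A_def B_def N_def by auto
  define Q where "Q a = {q. q permutes B \<and> (\<forall>x\<in>B. x \<noteq> a \<longrightarrow> q x \<noteq> x)}" for a
  define \<Phi> where "\<Phi> = (\<lambda>(a::nat,q::nat\<Rightarrow>nat). transpose a N \<circ> q)"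
  have qN: "q N = N" if "q permutes B" for q using permutes_not_in[OF that AB(2)] .
  have inj: "inj_on \<Phi> (Sigma B Q)"
  proof (rule inj_onI)
    fix x y assume x: "x \<in> Sigma B Q" and y: "y \<in> Sigma B Q" and e: "\<Phi> x = \<Phi> y"
    obtain a q where xa: "x = (a,q)" by (cases x)
    obtain b r where yb: "y = (b,r)" by (cases y)
    have q: "q permutes B" and r: "r permutes B" using x y xa yb by (auto simp: Q_def)
    have e2: "transpose a N \<circ> q = transpose b N \<circ> r" using e xa yb by (simp add: \<Phi>_def)
    have "a = b" using fun_cong[OF e2, of N] qN[OF q] qN[OF r] by simp
    moreover have "q = r"
    proof
      fix z
      have "transpose a N (q z) = transpose a N (r z)" using fun_cong[OF e2, of z] \<open>a = b\<close> by simp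
      then show "q z = r z" by (metis transpose_involutory)
    qed
    ultimately show "x = y" using xa yb by simp
  qed
  have img: "\<Phi> ` Sigma B Q = derset A"
  proof
    show "\<Phi> ` Sigma B Q \<subseteq> derset A"
    proof
      fix p assume "p \<in> \<Phi> ` Sigma B Q"
      then obtain a q where a: "a \<in> B" and q: "q \<in> Q a" and p: "p = transpose a N \<circ> q"
        by (auto simp: \<Phi>_def)
      have qB: "q permutes B" and qf: "\<And>x. x \<in> B \<Longrightarrow> x \<noteq> a \<Longrightarrow> q x \<noteq> x" using q by (auto simp: Q_def)
      have qA: "q permutes A" using permutes_subset[OF qB] AB by auto
      have "transpose a N permutes A" using a AB by (intro permutes_swap_id) auto
      then have pA: "p permutes A" using p permutes_compose[OF qA] by simp
      have "p x \<noteq> x" if "x \<in> A" for x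
      proof (cases "x = N")
        case True then show ?thesis using p qN[OF qB] a AB by auto
      next
        case False
        then have xB: "x \<in> B" using that AB by auto
        have qx: "q x \<in> B" using permutes_in_image[OF qB] xB by simp
        show ?thesis
        proof (cases "q x = a")
          case True then show ?thesis using p xB AB by auto
        next
          case False
          then have "p x = q x" using p qx AB by (auto simp: transpose_def)
          moreover have "q x \<noteq> x" using False qf xB by (cases "x = a") auto
          ultimately show ?thesis by simp
        qed
      qed
      then show "p \<in> derset A" using pA by (simp add: derset_def)
    qed
  next
    show "derset A \<subseteq> \<Phi> ` Sigma B Q"
    proof
      fix p assume "p \<in> derset A"
      then have pA: "p permutes A" and pf: "\<And>x. x \<in> A \<Longrightarrow> p x \<noteq> x" by (auto simp: derset_def)
      define a where "a = p N"
      have "a \<in> A" using permutes_in_image[OF pA] AB by (simp add: a_def)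
      moreover have "a \<noteq> N" using pf AB by (simp add: a_def)
      ultimately have aB: "a \<in> B" using AB by auto
      define q where "q = transpose a N \<circ> p"
      have "transpose a N permutes A" using aB AB by (intro permutes_swap_id) auto
      then have qA: "q permutes A" unfolding q_def by (rule permutes_compose[OF pA])
      have "q N = N" by (simp add: q_def a_def[symmetric])
      then have qB: "q permutes B" using AB by (intro permutes_superset[OF qA]) auto
      have "q x \<noteq> x" if "x \<in> B" "x \<noteq> a" for x
      proof
        assume qx: "q x = x"
        have xA: "x \<in> A" "x \<noteq> N" using that AB by auto
        have "p x \<noteq> x" using pf xA by simp
        moreover have "p x \<noteq> N"
        proof
          assume "p x = N" then have "q x = a" by (simp add: q_def)
          then show False using qx that by simp
        qed
        moreover have "p x \<noteq> a"
        proof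
          assume "p x = a"
          then have "p x = p N" by (simp add: a_def)
          then have "x = N" using permutes_inj[OF pA] by (simp add: inj_eq)
          then show False using xA by simp
        qed
        ultimately have "q x = p x" by (simp add: q_def transpose_def)
        then show False using qx \<open>p x \<noteq> x\<close> by simp
      qed
      then have "q \<in> Q a" using qB by (auto simp: Q_def)
      moreover have "p = \<Phi> (a, q)" by (simp add: \<Phi>_def q_def fun_eq_iff)
      ultimately show "p \<in> \<Phi> ` Sigma B Q" using aB by blast
    qed
  qed
  have cardQ: "card (Q a) = Der (Suc k) + Der k" if aB: "a \<in> B" for a
  proof -
    have fB: "finite B" by (simp add: B_def)
    have split: "Q a = derset B \<union> derset (B - {a})"
    proof
      show "Q a \<subseteq> derset B \<union> derset (B - {a})"
      proof
        fix q assume q: "q \<in> Q a"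
        then have qB: "q permutes B" and qf: "\<And>x. x \<in> B \<Longrightarrow> x \<noteq> a \<Longrightarrow> q x \<noteq> x" by (auto simp: Q_def)
        show "q \<in> derset B \<union> derset (B - {a})"
        proof (cases "q a = a")
          case True
          then have "q permutes B - {a}" by (intro permutes_superset[OF qB]) auto
          then show ?thesis using qf by (auto simp: derset_def)
        next
          case False then show ?thesis using qB qf by (auto simp: derset_def)
        qed
      qed
    next
      show "derset B \<union> derset (B - {a}) \<subseteq> Q a"
        by (auto simp: derset_def Q_def intro: permutes_subset)
    qed
    have disj: "derset B \<inter> derset (B - {a}) = {}"
    proof -
      have "q a = a" if "q permutes B - {a}" for q using permutes_not_in[OF that] by simp
      then show ?thesis using aB by (auto simp: derset_def)
    qed
    have "card (Q a) = card (derset B) + card (derset (B - {a}))"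
      unfolding split by (rule card_Un_disjoint) (auto simp: finite_derset fB disj)
    also have "\<dots> = Der (Suc k) + Der k"
      using aB fB by (simp add: card_derset B_def)
    finally show ?thesis .
  qed
  have "Der N = card (derset A)" by (simp add: card_derset A_def)
  also have "\<dots> = card (Sigma B Q)" using card_image[OF inj] img by simp
  also have "\<dots> = (\<Sum>a\<in>B. card (Q a))"
    by (rule card_SigmaI) (auto simp: B_def Q_def intro: finite_subset[OF _ finite_permutations[of B]])
  also have "\<dots> = (\<Sum>a\<in>B. Der (Suc k) + Der k)" using cardQ by simp
  also have "\<dots> = Suc k * (Der (Suc k) + Der k)" by (simp add: B_def)
  finally show ?thesis by (simp add: N_def)
qed


definition sf :: "nat list \<Rightarrow> bool" where
  "sf xs \<longleftrightarrow> (\<forall>(a,b)\<in>adj xs. b \<noteq> Suc a)"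

definition S :: "nat \<Rightarrow> nat list set" where
  "S k = {xs. distinct xs \<and> set xs = {0..k} \<and> hd xs = 0 \<and> sf xs}"

lemma sf_Nil[simp]: "sf []" by (simp add: sf_def)
lemma sf_Cons: "sf (x # xs) \<longleftrightarrow> sf xs \<and> (xs \<noteq> [] \<longrightarrow> hd xs \<noteq> Suc x)"
  by (cases xs) (simp add: sf_def, simp add: sf_def, blast)
lemma sf_append: "sf (us @ vs) \<longleftrightarrow> sf us \<and> sf vs \<and> (us \<noteq> [] \<and> vs \<noteq> [] \<longrightarrow> hd vs \<noteq> Suc (last us))"
  by (auto simp: sf_def adj_append)

lemma finite_S: "finite (S k)"
proof -
  have "S k \<subseteq> {xs. set xs \<subseteq> {0..k} \<and> length xs \<le> Suc k}"
    by (auto simp: S_def dest: distinct_card[symmetric])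
  then show ?thesis by (rule finite_subset) (rule finite_lists_length_le, simp)
qed

lemma S_0: "S 0 = {[0]}"
proof
  show "S 0 \<subseteq> {[0]}"
  proof
    fix xs assume "xs \<in> S 0"
    then have d: "distinct xs" and s: "set xs = {0}" by (auto simp: S_def)
    then have "length xs = 1" using distinct_card[OF d] by simp
    then obtain x where "xs = [x]" by (cases xs) auto
    then show "xs \<in> {[0]}" using s by simp
  qed
next
  have "sf [0]" by (simp add: sf_def)
  then show "{[0]} \<subseteq> S 0" by (simp add: S_def)
qed

lemma S_1: "S 1 = {}"
proof -
  have False if "xs \<in> S 1" for xs
  proof -
    have d: "distinct xs" and s0: "set xs = {0..1}" and h: "hd xs = 0" and f: "sf xs"
      using that unfolding S_def by blast+
    have s: "set xs = {0,1}" using s0 by (simp add: atLeast0_atMost_Suc insert_commute)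
    then have "length xs = 2" using distinct_card[OF d] by simp
    then have "length xs = Suc (Suc 0)" by simp
    then obtain x y where xy: "xs = [x,y]" unfolding length_Suc_conv by auto
    then have "x = 0" using h by simp
    moreover have "y \<in> {0,1}" using xy s by (metis list.set_intros(1) list.set_intros(2))
    moreover have "y \<noteq> x" using xy d by simp
    ultimately have "y = 1" by auto
    then show False using f xy \<open>x = 0\<close> by (simp add: sf_Cons)
  qed
  then show ?thesis by blast
qed


definition up :: "nat \<Rightarrow> nat \<Rightarrow> nat" where "up a x = (if a < x then Suc x else x)"
definition dn :: "nat \<Rightarrow> nat \<Rightarrow> nat" where "dn a x = (if Suc a < x then x - 1 else x)"

lemma up_neq: "up a x \<noteq> Suc a" by (simp add: up_def)
lemma inj_up: "inj (up a)" by (rule injI) (simp add: up_def split: if_splits)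
lemma dn_up[simp]: "dn a (up a x) = x" by (simp add: up_def dn_def)
lemma up_dn: "x \<noteq> Suc a \<Longrightarrow> up a (dn a x) = x" by (simp add: up_def dn_def) arith
lemma up_a[simp]: "up a a = a" by (simp add: up_def)
lemma up_eq_a: "up a x = a \<longleftrightarrow> x = a" by (simp add: up_def)

lemma up_image: "a \<le> k \<Longrightarrow> up a ` {0..k} = {0..Suc k} - {Suc a}"
proof
  assume "a \<le> k"
  show "up a ` {0..k} \<subseteq> {0..Suc k} - {Suc a}" by (auto simp: up_def)
  show "{0..Suc k} - {Suc a} \<subseteq> up a ` {0..k}"
  proof
    fix y assume y: "y \<in> {0..Suc k} - {Suc a}"
    show "y \<in> up a ` {0..k}"
    proof (cases "y \<le> a")
      case True
      then have "y = up a y" by (simp add: up_def)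
      then show ?thesis using True \<open>a \<le> k\<close> by auto
    next
      case False
      then have "y = up a (y - 1)" "y - 1 \<le> k" using y by (auto simp: up_def)
      then show ?thesis by auto
    qed
  qed
qed

lemma inj_on_dn: "inj_on (dn a) (- {Suc a})"
  by (rule inj_onI) (simp add: dn_def split: if_splits)

lemma dn_image: "a \<le> k \<Longrightarrow> dn a ` ({0..Suc (Suc k)} - {Suc (Suc k), Suc a}) = {0..k}"
proof
  assume "a \<le> k"
  show "dn a ` ({0..Suc (Suc k)} - {Suc (Suc k), Suc a}) \<subseteq> {0..k}" using \<open>a \<le> k\<close> by (auto simp: dn_def)
  show "{0..k} \<subseteq> dn a ` ({0..Suc (Suc k)} - {Suc (Suc k), Suc a})"
  proof
    fix y assume y: "y \<in> {0..k}"
    show "y \<in> dn a ` ({0..Suc (Suc k)} - {Suc (Suc k), Suc a})"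
    proof (cases "y \<le> a")
      case True
      then have "y = dn a y" by (simp add: dn_def)
      then show ?thesis using True y by auto
    next
      case False
      then have "y = dn a (Suc y)" using y by (auto simp: dn_def)
      then show ?thesis using False y by auto
    qed
  qed
qed

lemma map_up_S:
  assumes L: "L \<in> S k" and a: "a \<le> k"
  shows "distinct (map (up a) L)" "set (map (up a) L) = {0..Suc k} - {Suc a}"
    "hd (map (up a) L) = 0" "sf (map (up a) L)"
    "\<And>y. (a, y) \<in> adj (map (up a) L) \<Longrightarrow> y \<noteq> Suc (Suc a)"
proof -
  have d: "distinct L" and s: "set L = {0..k}" and h: "hd L = 0" and f: "sf L"
    using L unfolding S_def by blast+
  have "0 \<in> set L" using s by simp
  then have ne: "L \<noteq> []" by (metis empty_iff list.set(1))
  have "inj_on (up a) (set L)" using inj_up by (rule inj_on_subset) simp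
  then show "distinct (map (up a) L)" using d by (simp add: distinct_map)
  show "set (map (up a) L) = {0..Suc k} - {Suc a}" using up_image[OF a] s by simp
  show "hd (map (up a) L) = 0" using h ne by (simp add: hd_map up_def)
  show "sf (map (up a) L)"
    unfolding sf_def adj_map
  proof (clarsimp)
    fix x y assume xy: "(x,y) \<in> adj L" and e: "up a y = Suc (up a x)"
    have "y \<noteq> Suc x" using f xy by (auto simp: sf_def)
    moreover have "x \<noteq> y" using adj_neq[OF d xy] .
    ultimately show False using e by (auto simp: up_def split: if_splits)
  qed
  fix y assume "(a, y) \<in> adj (map (up a) L)"
  then obtain x z where xz: "(x,z) \<in> adj L" "up a x = a" "up a z = y" unfolding adj_map by auto
  then have "x = a" by (simp add: up_eq_a)
  then have "z \<noteq> Suc a" using f xz by (auto simp: sf_def)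
  then show "y \<noteq> Suc (Suc a)" using xz by (auto simp: up_def split: if_splits)
qed


lemma S_elims: assumes "L \<in> S k"
  shows "distinct L" "set L = {0..k}" "hd L = 0" "sf L" "L \<noteq> []"
proof -
  show "distinct L" "set L = {0..k}" "hd L = 0" "sf L" using assms unfolding S_def by blast+
  then have "0 \<in> set L" by simp
  then show "L \<noteq> []" by (metis empty_iff list.set(1))
qed

lemma f1_S:
  assumes L: "L \<in> S (Suc k)" and a: "a \<le> k"
  obtains us vs where "L = us @ a # vs" "a \<notin> set us" "a \<notin> set vs"
    "repl a [a, Suc (Suc k)] L = us @ a # Suc (Suc k) # vs"
    "vs = [] \<or> hd vs \<noteq> Suc a"
    "repl a [a, Suc (Suc k)] L \<in> S (Suc (Suc k))"
proof -
  note E = S_elims[OF L]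
  have "a \<in> set L" using E(2) a by simp
  from distinct_split[OF E(1) this] obtain us vs where
    uv: "L = us @ a # vs" "a \<notin> set us" "a \<notin> set vs" by blast
  define M where "M = Suc (Suc k)"
  have R: "repl a [a, M] L = us @ a # M # vs" using uv repl_split by simp
  have fL: "sf us" "sf vs" "us \<noteq> [] \<longrightarrow> a \<noteq> Suc (last us)" "vs \<noteq> [] \<longrightarrow> hd vs \<noteq> Suc a"
    using E(4) uv(1) by (simp_all add: sf_append sf_Cons)
  have hv: "vs \<noteq> [] \<longrightarrow> hd vs \<le> Suc k"
  proof
    assume "vs \<noteq> []"
    then have "hd vs \<in> set L" using uv(1) by simp
    then show "hd vs \<le> Suc k" using E(2) by simp
  qed
  have MnL: "M \<notin> set L" using E(2) by (simp add: M_def)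
  have "distinct (us @ a # M # vs)" using E(1) MnL uv(1) by auto
  moreover have "set (us @ a # M # vs) = {0..M}"
  proof -
    have "set (us @ a # M # vs) = insert M (set L)" using uv(1) by auto
    also have "\<dots> = {0..M}" using E(2) by (auto simp: M_def)
    finally show ?thesis .
  qed
  moreover have "hd (us @ a # M # vs) = 0"
    using E(3) uv(1) by (cases us) simp_all
  moreover have "sf (us @ a # M # vs)"
    using fL hv a by (auto simp: sf_append sf_Cons M_def)
  ultimately have "us @ a # M # vs \<in> S M" by (simp add: S_def)
  then show ?thesis using that uv R fL(4) by (auto simp: M_def)
qed

lemma f2_S:
  assumes L: "L \<in> S k" and a: "a \<le> k"
  obtains us vs where "map (up a) L = us @ a # vs" "a \<notin> set us" "a \<notin> set vs"
    "repl a [a, Suc (Suc k), Suc a] (map (up a) L) = us @ a # Suc (Suc k) # Suc a # vs"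
    "Suc a \<notin> set (us @ a # vs)" "Suc (Suc k) \<notin> set (us @ a # vs)"
    "repl a [a, Suc (Suc k), Suc a] (map (up a) L) \<in> S (Suc (Suc k))"
proof -
  note E = map_up_S[OF L a]
  define L' where "L' = map (up a) L"
  have "a \<in> set L'" using E(2) a by (simp add: L'_def)
  from distinct_split[OF E(1)[folded L'_def] this] obtain us vs where
    uv: "L' = us @ a # vs" "a \<notin> set us" "a \<notin> set vs" by blast
  define M where "M = Suc (Suc k)"
  have R: "repl a [a, M, Suc a] L' = us @ a # M # Suc a # vs" using uv repl_split by simp
  have fL: "sf us" "sf vs" "us \<noteq> [] \<longrightarrow> a \<noteq> Suc (last us)"
    using E(4)[folded L'_def] uv(1) by (simp_all add: sf_append sf_Cons)
  have hv: "vs \<noteq> [] \<longrightarrow> hd vs \<noteq> Suc (Suc a)"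
  proof
    assume ne: "vs \<noteq> []"
    have "(a, hd vs) \<in> adj L'" using uv(1) ne by (simp add: adj_append adj_Cons)
    then show "hd vs \<noteq> Suc (Suc a)" using E(5) by (simp add: L'_def)
  qed
  have MnL: "M \<notin> set L'" "Suc a \<notin> set L'" using E(2) by (simp_all add: M_def L'_def)
  have "distinct (us @ a # M # Suc a # vs)" using E(1)[folded L'_def] MnL uv(1) a by (auto simp: M_def)
  moreover have "set (us @ a # M # Suc a # vs) = {0..M}"
  proof -
    have "set (us @ a # M # Suc a # vs) = insert M (insert (Suc a) (set L'))" using uv(1) by auto
    also have "\<dots> = {0..M}" using E(2) a by (auto simp: M_def L'_def)
    finally show ?thesis .
  qed
  moreover have "hd (us @ a # M # Suc a # vs) = 0"
    using E(3) uv(1) by (cases us) (simp_all add: L'_def)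
  moreover have "sf (us @ a # M # Suc a # vs)"
    using fL hv a by (simp add: sf_append sf_Cons M_def)
  ultimately have "us @ a # M # Suc a # vs \<in> S M" by (simp add: S_def)
  then show ?thesis using that uv R MnL by (auto simp: M_def L'_def)
qed


lemma f1_props:
  assumes L: "L \<in> S (Suc k)" and a: "a \<le> k"
  defines "R \<equiv> repl a [a, Suc (Suc k)] L"
  shows "R \<in> S (Suc (Suc k))" "(a, Suc (Suc k)) \<in> adj R" "(Suc (Suc k), Suc a) \<notin> adj R"
    "filter (\<lambda>x. x \<noteq> Suc (Suc k)) R = L"
proof -
  obtain us vs where uv: "L = us @ a # vs" "a \<notin> set us" "a \<notin> set vs"
    "R = us @ a # Suc (Suc k) # vs" "vs = [] \<or> hd vs \<noteq> Suc a" "R \<in> S (Suc (Suc k))"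
    using f1_S[OF L a] unfolding R_def by metis
  show "R \<in> S (Suc (Suc k))" by fact
  have MnL: "Suc (Suc k) \<notin> set L" using S_elims(2)[OF L] by simp
  then have Mu: "Suc (Suc k) \<notin> set us" "Suc (Suc k) \<notin> set vs" using uv(1) by auto
  show "(a, Suc (Suc k)) \<in> adj R" using uv(4) by (simp add: adj_append)
  show "(Suc (Suc k), Suc a) \<notin> adj R"
  proof
    assume "(Suc (Suc k), Suc a) \<in> adj R"
    then have "(Suc (Suc k), Suc a) \<in> adj us \<or> (us \<noteq> [] \<and> last us = Suc (Suc k))
       \<or> (vs \<noteq> [] \<and> hd vs = Suc a) \<or> (Suc (Suc k), Suc a) \<in> adj vs"
      using uv(4) a by (auto simp: adj_append adj_Cons split: if_splits)
    then show False using Mu uv(5) adj_set[of _ _ us] adj_set[of _ _ vs] by (auto dest: last_in_set)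
  qed
  show "filter (\<lambda>x. x \<noteq> Suc (Suc k)) R = L"
  proof -
    have "filter (\<lambda>x. x \<noteq> Suc (Suc k)) us = us" "filter (\<lambda>x. x \<noteq> Suc (Suc k)) vs = vs"
      using Mu by (auto intro: filter_True)
    then show ?thesis using uv(1,4) a by simp
  qed
qed

lemma f2_props:
  assumes L: "L \<in> S k" and a: "a \<le> k"
  defines "R \<equiv> repl a [a, Suc (Suc k), Suc a] (map (up a) L)"
  shows "R \<in> S (Suc (Suc k))" "(a, Suc (Suc k)) \<in> adj R" "(Suc (Suc k), Suc a) \<in> adj R"
    "map (dn a) (filter (\<lambda>x. x \<noteq> Suc (Suc k) \<and> x \<noteq> Suc a) R) = L"
proof -
  obtain us vs where uv: "map (up a) L = us @ a # vs" "a \<notin> set us" "a \<notin> set vs"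
    "R = us @ a # Suc (Suc k) # Suc a # vs"
    "Suc a \<notin> set (us @ a # vs)" "Suc (Suc k) \<notin> set (us @ a # vs)" "R \<in> S (Suc (Suc k))"
    using f2_S[OF L a] unfolding R_def by metis
  show "R \<in> S (Suc (Suc k))" by fact
  show "(a, Suc (Suc k)) \<in> adj R" using uv(4) by (simp add: adj_append)
  show "(Suc (Suc k), Suc a) \<in> adj R" using uv(4) by (simp add: adj_append)
  have "filter (\<lambda>x. x \<noteq> Suc (Suc k) \<and> x \<noteq> Suc a) R = us @ a # vs"
  proof -
    have "filter (\<lambda>x. x \<noteq> Suc (Suc k) \<and> x \<noteq> Suc a) us = us"
      "filter (\<lambda>x. x \<noteq> Suc (Suc k) \<and> x \<noteq> Suc a) vs = vs"
      using uv(5,6) by (auto intro: filter_True)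
    then show ?thesis using uv(4) a by simp
  qed
  then show "map (dn a) (filter (\<lambda>x. x \<noteq> Suc (Suc k) \<and> x \<noteq> Suc a) R) = L"
    using uv(1) by (metis (no_types, lifting) dn_up map_idI map_map o_apply)
qed


lemma adj_sub: "adj (us @ a # ws) \<subseteq> adj (us @ a # b # c # ws) \<union> (if ws = [] then {} else {(a, hd ws)})"
  by (cases ws) (auto simp: adj_append adj_Cons)

lemma cover:
  assumes L: "L \<in> S (Suc (Suc k))"
  shows "(\<exists>a L0. a \<le> k \<and> L0 \<in> S (Suc k) \<and> L = repl a [a, Suc (Suc k)] L0) \<or>
         (\<exists>a L1. a \<le> k \<and> L1 \<in> S k \<and> L = repl a [a, Suc (Suc k), Suc a] (map (up a) L1))"
proof -
  define M where "M = Suc (Suc k)"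
  note E = S_elims[OF L, folded M_def]
  have "M \<in> set L" using E(2) by simp
  from distinct_split[OF E(1) this] obtain us0 vs where
    uv0: "L = us0 @ M # vs" "M \<notin> set us0" "M \<notin> set vs" by blast
  have "us0 \<noteq> []"
  proof
    assume "us0 = []" then have "hd L = M" using uv0 by simp
    then show False using E(3) by (simp add: M_def)
  qed
  then obtain us a where "us0 = us @ [a]" by (metis rev_exhaust)
  then have LL: "L = us @ a # M # vs" using uv0 by simp
  have dL: "a \<notin> set us" "a \<notin> set vs" "M \<notin> set us" "M \<notin> set vs" "a \<noteq> M"
    "distinct us" "distinct vs" "set us \<inter> set vs = {}"
    using E(1) LL by auto
  have fL: "sf us" "sf vs" "us \<noteq> [] \<longrightarrow> a \<noteq> Suc (last us)" "M \<noteq> Suc a"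
     "vs \<noteq> [] \<longrightarrow> hd vs \<noteq> Suc M"
    using E(4) LL by (simp_all add: sf_append sf_Cons)
  have "a \<in> set L" using LL by simp
  then have ak: "a \<le> k" using E(2) dL(5) fL(4) by (auto simp: M_def)
  have hdL: "hd (us @ a # xs) = 0" for xs using E(3) LL by (cases us) simp_all
  show ?thesis
  proof (cases "vs = [] \<or> hd vs \<noteq> Suc a")
    case True
    define L0 where "L0 = us @ a # vs"
    have "distinct L0" using E(1) LL by (simp add: L0_def)
    moreover have "set L0 = {0..Suc k}"
    proof -
      have "set L = insert M (set L0)" "M \<notin> set L0" using LL dL by (auto simp: L0_def)
      then have "set L0 = set L - {M}" by blast
      then have "set L0 = {0..M} - {M}" using E(2) by simp
      then show ?thesis by (simp add: M_def atLeast0_atMost_Suc)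
    qed
    moreover have "hd L0 = 0" using hdL by (simp add: L0_def)
    moreover have "sf L0" using fL True by (auto simp: L0_def sf_append sf_Cons)
    ultimately have "L0 \<in> S (Suc k)" by (simp add: S_def)
    moreover have "L = repl a [a, M] L0" using LL dL repl_split by (simp add: L0_def)
    ultimately show ?thesis using ak by (auto simp: M_def)
  next
    case False
    then obtain ws where vs: "vs = Suc a # ws" by (cases vs) auto
    define P where "P = us @ a # ws"
    have LP: "L = us @ a # M # Suc a # ws" using LL vs by simp
    have nP: "Suc a \<notin> set P" "M \<notin> set P" "distinct P" using E(1) LP by (auto simp: P_def)
    have setP: "set P = {0..M} - {M, Suc a}"
    proof -
      have "set L = insert M (insert (Suc a) (set P))" using LP by (auto simp: P_def)
      then show ?thesis using E(2) nP by auto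
    qed
    have adjP: "y \<noteq> Suc x \<and> (x = a \<longrightarrow> y \<noteq> Suc (Suc a))" if xy: "(x,y) \<in> adj P" for x y
    proof (cases "x = a")
      case True
      have aM: "(a, M) \<in> adj L" using LP by (simp add: adj_append)
      have "(a, y) \<in> adj L \<or> (ws \<noteq> [] \<and> y = hd ws)"
        using adj_sub[of us a ws M "Suc a"] xy True unfolding P_def LP by (auto split: if_splits)
      moreover have "(a, y) \<notin> adj L"
      proof
        assume "(a, y) \<in> adj L"
        then have "y = M" using adj_succ_unique[OF E(1) _ aM] by simp
        then show False using adj_set[OF xy] nP by simp
      qed
      moreover have "ws \<noteq> [] \<longrightarrow> hd ws \<noteq> Suc (Suc a)"
        using E(4) LP by (simp add: sf_append sf_Cons)
      moreover have "y \<noteq> Suc a" using adj_set[OF xy] nP by auto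
      ultimately show ?thesis using True by auto
    next
      case False
      have "(x, y) \<in> adj L"
        using adj_sub[of us a ws M "Suc a"] xy False unfolding P_def LP by (auto split: if_splits)
      then show ?thesis using E(4) False by (auto simp: sf_def)
    qed
    define L1 where "L1 = map (dn a) P"
    have injP: "inj_on (dn a) (set P)" using inj_on_subset[OF inj_on_dn] nP by auto
    have "distinct L1" using nP injP by (simp add: L1_def distinct_map)
    moreover have "set L1 = {0..k}" using dn_image[OF ak] setP by (simp add: L1_def M_def)
    moreover have "hd L1 = 0"
    proof -
      have "hd P = 0" "P \<noteq> []" using hdL[of ws] by (simp_all add: P_def)
      then show ?thesis by (simp add: L1_def hd_map dn_def)
    qed
    moreover have "sf L1"
      unfolding sf_def L1_def adj_map
    proof clarsimp
      fix x y assume xy: "(x,y) \<in> adj P" and e: "dn a y = Suc (dn a x)"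
      have "x \<noteq> Suc a" "y \<noteq> Suc a" "x \<noteq> y" using adj_set[OF xy] nP adj_neq[OF nP(3) xy] by auto
      then show False using adjP[OF xy] e by (auto simp: dn_def split: if_splits)
    qed
    ultimately have "L1 \<in> S k" by (simp add: S_def)
    moreover have "map (up a) L1 = P"
    proof -
      have "map (up a) L1 = map (\<lambda>x. up a (dn a x)) P" by (simp add: L1_def)
      also have "\<dots> = P" using nP(1) by (intro map_idI) (auto intro: up_dn)
      finally show ?thesis .
    qed
    moreover have "repl a [a, M, Suc a] P = L" using dL vs LP repl_split by (simp add: P_def)
    ultimately show ?thesis using ak by (auto simp: M_def)
  qed
qed


lemma S_rec: "card (S (Suc (Suc k))) = Suc k * (card (S (Suc k)) + card (S k))"
proof -
  define M where "M = Suc (Suc k)"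
  define f1 where "f1 = (\<lambda>(a, L). repl a [a, M] L)"
  define f2 where "f2 = (\<lambda>(a, L). repl a [a, M, Suc a] (map (up a) L))"
  define D1 where "D1 = {0..k} \<times> S (Suc k)"
  define D2 where "D2 = {0..k} \<times> S k"
  have P1: "f1 (a, L) \<in> S M" "(a, M) \<in> adj (f1 (a, L))" "(M, Suc a) \<notin> adj (f1 (a, L))"
     "filter (\<lambda>x. x \<noteq> M) (f1 (a, L)) = L" if "(a, L) \<in> D1" for a L
    using f1_props[of L k a] that by (auto simp: f1_def D1_def M_def)
  have P2: "f2 (a, L) \<in> S M" "(a, M) \<in> adj (f2 (a, L))" "(M, Suc a) \<in> adj (f2 (a, L))"
     "map (dn a) (filter (\<lambda>x. x \<noteq> M \<and> x \<noteq> Suc a) (f2 (a, L))) = L" if "(a, L) \<in> D2" for a L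
    using f2_props[of L k a] that by (auto simp: f2_def D2_def M_def)
  have inj1: "inj_on f1 D1"
  proof (rule inj_onI)
    fix x y assume x: "x \<in> D1" and y: "y \<in> D1" and e: "f1 x = f1 y"
    obtain a L where xa: "x = (a, L)" by (cases x)
    obtain b L' where yb: "y = (b, L')" by (cases y)
    have d: "distinct (f1 x)" using P1(1)[of a L] x xa S_elims(1) by blast
    have "a = b" using adj_pred_unique[OF d, of a M b] P1(2)[of a L] P1(2)[of b L'] x y xa yb e by simp
    moreover have "L = L'" using P1(4)[of a L] P1(4)[of b L'] x y xa yb e by simp
    ultimately show "x = y" using xa yb by simp
  qed
  have inj2: "inj_on f2 D2"
  proof (rule inj_onI)
    fix x y assume x: "x \<in> D2" and y: "y \<in> D2" and e: "f2 x = f2 y"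
    obtain a L where xa: "x = (a, L)" by (cases x)
    obtain b L' where yb: "y = (b, L')" by (cases y)
    have xD: "(a, L) \<in> D2" and yD: "(b, L') \<in> D2" using x y xa yb by simp_all
    have e': "f2 (a, L) = f2 (b, L')" using e xa yb by simp
    have d: "distinct (f2 (a, L))" using P2(1)[OF xD] S_elims(1) by blast
    have m1: "(a, M) \<in> adj (f2 (a, L))" using P2(2)[OF xD] .
    have m2: "(b, M) \<in> adj (f2 (a, L))" using P2(2)[OF yD] e' by simp
    have "a = b" using adj_pred_unique[OF d m1 m2] .
    moreover have "L = L'" using P2(4)[OF xD] P2(4)[OF yD] e' \<open>a = b\<close> by metis
    ultimately show "x = y" using xa yb by simp
  qed
  have disj: "f1 ` D1 \<inter> f2 ` D2 = {}"
  proof (rule ccontr)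
    assume "f1 ` D1 \<inter> f2 ` D2 \<noteq> {}"
    then obtain a L b L' where ab: "(a, L) \<in> D1" "(b, L') \<in> D2" "f1 (a, L) = f2 (b, L')" by auto
    have d: "distinct (f1 (a, L))" using P1(1)[OF ab(1)] S_elims(1) by blast
    have "a = b" using adj_pred_unique[OF d, of a M b] P1(2)[OF ab(1)] P2(2)[OF ab(2)] ab(3) by simp
    then show False using P1(3)[OF ab(1)] P2(3)[OF ab(2)] ab(3) by simp
  qed
  have eq: "S M = f1 ` D1 \<union> f2 ` D2"
  proof
    show "f1 ` D1 \<union> f2 ` D2 \<subseteq> S M" using P1(1) P2(1) by auto
    show "S M \<subseteq> f1 ` D1 \<union> f2 ` D2"
    proof
      fix L assume "L \<in> S M"
      then have "(\<exists>a L0. a \<le> k \<and> L0 \<in> S (Suc k) \<and> L = repl a [a, M] L0) \<or>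
         (\<exists>a L1. a \<le> k \<and> L1 \<in> S k \<and> L = repl a [a, M, Suc a] (map (up a) L1))"
        using cover[of L k] by (simp add: M_def)
      then show "L \<in> f1 ` D1 \<union> f2 ` D2"
      proof
        assume "\<exists>a L0. a \<le> k \<and> L0 \<in> S (Suc k) \<and> L = repl a [a, M] L0"
        then obtain a L0 where "a \<le> k" "L0 \<in> S (Suc k)" "L = repl a [a, M] L0" by blast
        then have "(a, L0) \<in> D1" "L = f1 (a, L0)" by (simp_all add: D1_def f1_def)
        then show ?thesis by blast
      next
        assume "\<exists>a L1. a \<le> k \<and> L1 \<in> S k \<and> L = repl a [a, M, Suc a] (map (up a) L1)"
        then obtain a L1 where "a \<le> k" "L1 \<in> S k" "L = repl a [a, M, Suc a] (map (up a) L1)" by blast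
        then have "(a, L1) \<in> D2" "L = f2 (a, L1)" by (simp_all add: D2_def f2_def)
        then show ?thesis by blast
      qed
    qed
  qed
  have fD: "finite D1" "finite D2" by (simp_all add: D1_def D2_def finite_S)
  have "card (S M) = card (f1 ` D1) + card (f2 ` D2)"
    unfolding eq by (rule card_Un_disjoint) (use fD disj in auto)
  also have "\<dots> = card D1 + card D2" using card_image[OF inj1] card_image[OF inj2] by simp
  also have "\<dots> = Suc k * (card (S (Suc k)) + card (S k))"
    by (simp add: D1_def D2_def card_cartesian_product algebra_simps)
  finally show ?thesis by (simp add: M_def)
qed

lemma card_S: "card (S k) = Der k"
proof (induction k rule: nat_less_induct)
  case (1 n)
  show ?case
  proof (cases n)
    case 0 then show ?thesis by (simp add: S_0 Der_0)
  next
    case (Suc m)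
    show ?thesis
    proof (cases m)
      case 0 then show ?thesis using Suc S_1 Der_1 by simp
    next
      case (Suc j)
      then show ?thesis using 1 \<open>n = Suc m\<close> by (simp add: S_rec Der_rec)
    qed
  qed
qed


definition fm :: "nat \<Rightarrow> nat \<Rightarrow> nat \<Rightarrow> nat" where
  "fm m c x = (if c \<le> x then x - c else x + m - c)"
definition gm :: "nat \<Rightarrow> nat \<Rightarrow> nat \<Rightarrow> nat" where
  "gm m c y = (if y + c \<le> m then y + c else y + c - m)"

context
  fixes m c :: nat
  assumes c: "1 \<le> c" "c \<le> m"
begin

lemma gm_range: "y < m \<Longrightarrow> gm m c y \<in> {1..m}" using c by (auto simp: gm_def)
lemma fm_range: "x \<in> {1..m} \<Longrightarrow> fm m c x < m" using c by (auto simp: fm_def)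
lemma gm_fm: "x \<in> {1..m} \<Longrightarrow> gm m c (fm m c x) = x" using c by (auto simp: fm_def gm_def)
lemma fm_gm: "y < m \<Longrightarrow> fm m c (gm m c y) = y" using c by (auto simp: fm_def gm_def)
lemma fm_c: "fm m c c = 0" by (simp add: fm_def)
lemma gm_0: "gm m c 0 = c" using c by (simp add: gm_def)
lemma gm_succ: "y1 < m \<Longrightarrow> y2 < m \<Longrightarrow>
   (gm m c y2 = Suc (gm m c y1) \<or> (gm m c y1 = m \<and> gm m c y2 = 1)) \<longleftrightarrow>
   (y2 = Suc y1 \<or> (y1 = m - 1 \<and> y2 = 0))"
  using c by (auto simp: gm_def)

lemma gm_image: "gm m c ` {0..m-1} = {1..m}"
proof
  show "gm m c ` {0..m-1} \<subseteq> {1..m}" using gm_range c by auto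
  show "{1..m} \<subseteq> gm m c ` {0..m-1}"
  proof
    fix x assume x: "x \<in> {1..m}"
    have "fm m c x < m" using fm_range x by blast
    then have "x = gm m c (fm m c x)" "fm m c x \<in> {0..m-1}" using gm_fm x by auto
    then show "x \<in> gm m c ` {0..m-1}" by blast
  qed
qed

lemma fm_image: "fm m c ` {1..m} = {0..m-1}"
proof
  show "fm m c ` {1..m} \<subseteq> {0..m-1}" using fm_range by fastforce
  show "{0..m-1} \<subseteq> fm m c ` {1..m}"
  proof
    fix y assume y: "y \<in> {0..m-1}"
    then have "y < m" using c by auto
    then have "y = fm m c (gm m c y)" "gm m c y \<in> {1..m}" using fm_gm gm_range by auto
    then show "y \<in> fm m c ` {1..m}" by blast
  qed
qed

lemma inj_fm: "inj_on (fm m c) {1..m}"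
  by (rule inj_on_inverseI[where g = "gm m c"]) (rule gm_fm)
lemma inj_gm: "inj_on (gm m c) {0..m-1}"
proof (rule inj_on_inverseI[where g = "fm m c"])
  fix y assume "y \<in> {0..m-1}" then have "y < m" using c by auto
  then show "fm m c (gm m c y) = y" by (rule fm_gm)
qed

end


lemma d_n1_iff: "xs \<in> d_n1 n \<longleftrightarrow> distinct xs \<and> set xs = {1..n} \<and>
   (\<forall>k\<in>{1..<n}. (k, Suc k) \<notin> adj xs) \<and> (n, 1) \<in> adj xs"
  by (simp add: d_n1_def linear_arrangement_def contains_adj)

lemma adj_drop_mid: "(u, v) \<in> adj (us @ b # vs) \<Longrightarrow>
   (u, v) \<in> adj (us @ a # b # vs) \<or> (v = b \<and> us \<noteq> [] \<and> u = last us)"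
  by (cases vs) (auto simp: adj_append adj_Cons split: if_splits)

lemma adj_ins_mid: "(u, v) \<in> adj (us @ a # b # vs) \<Longrightarrow>
   (u, v) \<in> adj (us @ b # vs) \<or> (u, v) = (a, b) \<or> (v = a \<and> us \<noteq> [] \<and> u = last us)"
  by (cases vs) (auto simp: adj_append adj_Cons split: if_splits)

lemma reduction:
  assumes n2: "n \<ge> 2" and i: "i \<in> {1..n}" and ne: "{xs \<in> d_n1 n. hd xs = i} \<noteq> {}"
  shows "card {xs \<in> d_n1 n. hd xs = i} = card (S (n - 2))"
proof -
  define m where "m = n - 1"
  have i1: "i \<noteq> 1"
  proof
    assume "i = 1"
    obtain xs where "xs \<in> d_n1 n" "hd xs = i" using ne by auto
    then have "distinct xs" "(n, 1) \<in> adj xs" "hd xs = 1" using \<open>i = 1\<close> by (auto simp: d_n1_iff)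
    then show False using adj_hd[of xs n 1] by simp
  qed
  define c where "c = (if i = n then 1 else i)"
  have c: "1 \<le> c" "c \<le> m" using i i1 n2 by (auto simp: c_def m_def)
  have m1: "m \<ge> 1" "n = Suc m" using n2 by (auto simp: m_def)
  define F where "F xs = map (fm m c) (filter (\<lambda>x. x \<noteq> n) xs)" for xs
  define G where "G w = repl 1 [n, 1] (map (gm m c) w)" for w
  define T where "T = {xs \<in> d_n1 n. hd xs = i}"
  have n2': "n - 2 = m - 1" by (simp add: m_def)
  have decT: "\<exists>us vs. xs = us @ n # 1 # vs \<and> n \<notin> set us \<and> n \<notin> set vs \<and> 1 \<notin> set us \<and> 1 \<notin> set vs
      \<and> set (us @ 1 # vs) = {1..m} \<and> distinct (us @ 1 # vs)" if "xs \<in> T" for xs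
  proof -
    have d: "distinct xs" "set xs = {1..n}" "(n, 1) \<in> adj xs" using that by (auto simp: T_def d_n1_iff)
    obtain us vs where uv: "xs = us @ n # 1 # vs" using adj_decomp[OF d(3)] by blast
    have "n \<notin> set us" "n \<notin> set vs" "1 \<notin> set us" "1 \<notin> set vs" "distinct (us @ 1 # vs)"
      using d(1) uv by auto
    moreover have "set (us @ 1 # vs) = {1..m}"
    proof -
      have "set xs = insert n (set (us @ 1 # vs))" "n \<notin> set (us @ 1 # vs)"
        using uv \<open>n \<notin> set us\<close> \<open>n \<notin> set vs\<close> n2 by auto
      then have "set (us @ 1 # vs) = set xs - {n}" by (simp add: Diff_insert_absorb)
      also have "\<dots> = {1..Suc m} - {Suc m}" using d(2) m1 by simp
      also have "\<dots> = {1..m}" by (simp add: atLeastAtMostSuc_conv)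
      finally show ?thesis .
    qed
    ultimately show ?thesis using uv by blast
  qed
  have FT: "F xs \<in> S (n - 2) \<and> G (F xs) = xs" if xT: "xs \<in> T" for xs
  proof -
    obtain us vs where uv: "xs = us @ n # 1 # vs" "n \<notin> set us" "n \<notin> set vs" "1 \<notin> set us" "1 \<notin> set vs"
      "set (us @ 1 # vs) = {1..m}" "distinct (us @ 1 # vs)" using decT[OF xT] by blast
    have xd: "distinct xs" "set xs = {1..n}" "\<And>k. k \<in> {1..<n} \<Longrightarrow> (k, Suc k) \<notin> adj xs"
      "(n, 1) \<in> adj xs" "hd xs = i" using xT by (auto simp: T_def d_n1_iff)
    define zs where "zs = us @ 1 # vs"
    have fz: "filter (\<lambda>x. x \<noteq> n) xs = zs"
    proof -
      have "filter (\<lambda>x. x \<noteq> n) us = us" "filter (\<lambda>x. x \<noteq> n) vs = vs"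
        using uv(2,3) by (auto intro: filter_True)
      then show ?thesis using uv(1) n2 by (simp add: zs_def)
    qed
    have Fx: "F xs = map (fm m c) zs" by (simp add: F_def fz)
    have hz: "hd zs = c"
    proof (cases "i = n")
      case True
      then have "us = []" using xd(5) uv(1,2) by (cases us) auto
      then show ?thesis using True by (simp add: zs_def c_def)
    next
      case False
      then have "us \<noteq> []" using xd(5) uv(1) by auto
      then show ?thesis using False xd(5) uv(1) by (simp add: zs_def c_def)
    qed
    have zsd: "distinct zs" "set zs = {1..m}" "zs \<noteq> []" using uv(6,7) by (simp_all add: zs_def)
    have "distinct (F xs)" unfolding Fx distinct_map using zsd inj_fm[OF c] by simp
    moreover have "set (F xs) = {0..n - 2}" unfolding Fx using zsd fm_image[OF c] n2' by simp
    moreover have "hd (F xs) = 0" unfolding Fx using zsd hz fm_c[OF c] by (simp add: hd_map)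
    moreover have "sf (F xs)"
      unfolding sf_def Fx adj_map
    proof clarsimp
      fix u v assume uv': "(u, v) \<in> adj zs" and e: "fm m c v = Suc (fm m c u)"
      have uvr: "u \<in> {1..m}" "v \<in> {1..m}" using adj_set[OF uv'] uv(6) by (auto simp: zs_def)
      have "\<not> (v = Suc u \<or> (u = m \<and> v = 1))"
      proof (cases "(u, v) \<in> adj xs")
        case True
        have "v \<noteq> Suc u" using xd(3)[of u] True uvr m1 by auto
        moreover have "\<not> (u = m \<and> v = 1)"
        proof
          assume "u = m \<and> v = 1"
          then have "m = n" using adj_pred_unique[OF xd(1) xd(4)] True by auto
          then show False using m1 by simp
        qed
        ultimately show ?thesis by blast
      next
        case False
        then have "v = 1" "us \<noteq> []" "u = last us" using adj_drop_mid[of u v us 1 vs n] uv' uv(1)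
          by (auto simp: zs_def)
        then have "(u, n) \<in> adj xs" using uv(1) by (simp add: adj_append)
        then have "u \<noteq> m" using xd(3)[of m] m1 by auto
        then show ?thesis using \<open>v = 1\<close> uvr by auto
      qed
      moreover have "fm m c u < m" "fm m c v < m" using uvr fm_range[OF c] by auto
      moreover have "gm m c (fm m c u) = u" "gm m c (fm m c v) = v" using gm_fm[OF c] uvr by auto
      ultimately show False using gm_succ[OF c, of "fm m c u" "fm m c v"] e by simp
    qed
    ultimately have "F xs \<in> S (n - 2)" by (simp add: S_def)
    moreover have "G (F xs) = xs"
    proof -
      have "map (gm m c) (F xs) = map (\<lambda>x. gm m c (fm m c x)) zs" unfolding Fx by simp
      also have "\<dots> = zs" using zsd(2) gm_fm[OF c] by (intro map_idI) auto
      finally have "map (gm m c) (F xs) = zs" .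
      then show ?thesis using uv repl_split by (simp add: G_def zs_def)
    qed
    ultimately show ?thesis by blast
  qed
  have GS: "G w \<in> T \<and> F (G w) = w" if wS: "w \<in> S (n - 2)" for w
  proof -
    note E = S_elims[OF wS]
    have wr: "\<And>y. y \<in> set w \<Longrightarrow> y < m" using E(2) n2' m1 by auto
    define zs where "zs = map (gm m c) w"
    have zsd: "distinct zs" using E(1,2) inj_gm[OF c] n2' by (simp add: zs_def distinct_map)
    have zss: "set zs = {1..m}" using E(2) gm_image[OF c] n2' by (simp add: zs_def)
    have hz: "hd zs = c" using E(3,5) gm_0[OF c(1) c(2)] by (simp add: zs_def hd_map)
    have "1 \<in> set zs" using zss m1 by simp
    from distinct_split[OF zsd this] obtain us vs where
      uv: "zs = us @ 1 # vs" "1 \<notin> set us" "1 \<notin> set vs" by blast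
    have nz: "n \<notin> set zs" using zss m1 by simp
    have Gw: "G w = us @ n # 1 # vs" using uv repl_split by (simp add: G_def zs_def[symmetric])
    have zpair: "\<not> (v = Suc u \<or> (u = m \<and> v = 1))" if "(u, v) \<in> adj zs" for u v
    proof -
      have "(u, v) \<in> (\<lambda>(a, b). (gm m c a, gm m c b)) ` adj w"
        using that by (simp only: zs_def adj_map)
      then obtain y1 y2 where yy: "(y1, y2) \<in> adj w" "u = gm m c y1" "v = gm m c y2"
        by auto
      have "y2 \<noteq> Suc y1" using E(4) yy(1) by (auto simp: sf_def)
      moreover have "y2 \<noteq> 0" using adj_hd[OF E(1) yy(1)] E(3) by simp
      moreover have "y1 < m" "y2 < m" using adj_set[OF yy(1)] wr by auto
      ultimately show ?thesis using gm_succ[OF c, of y1 y2] yy by auto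
    qed
    have "distinct (us @ 1 # vs)" "n \<notin> set (us @ 1 # vs)" using zsd nz uv(1) by simp_all
    then have "distinct (G w)" unfolding Gw by auto
    moreover have "set (G w) = {1..n}"
    proof -
      have "set (G w) = insert n (set zs)" unfolding Gw uv(1) by auto
      also have "\<dots> = insert (Suc m) {1..m}" using zss m1 by simp
      also have "\<dots> = {1..n}" using m1 by (simp add: atLeastAtMostSuc_conv)
      finally show ?thesis .
    qed
    moreover have "(n, 1) \<in> adj (G w)" using Gw by (simp add: adj_append)
    moreover have "hd (G w) = i"
    proof (cases "i = n")
      case True
      then have "us = []" using hz uv(1,2) by (cases us) (auto simp: c_def)
      then show ?thesis using Gw True by simp
    next
      case False
      then have "us \<noteq> []" using hz uv(1) i1 by (auto simp: c_def)
      then show ?thesis using Gw hz uv(1) False by (simp add: c_def)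
    qed
    moreover have "(k, Suc k) \<notin> adj (G w)" if k: "k \<in> {1..<n}" for k
    proof
      assume a: "(k, Suc k) \<in> adj (G w)"
      from adj_ins_mid[of k "Suc k" us n 1 vs] a Gw
      have "(k, Suc k) \<in> adj zs \<or> (k, Suc k) = (n, 1) \<or> (Suc k = n \<and> us \<noteq> [] \<and> k = last us)"
        using uv(1) by simp
      then show False
      proof (elim disjE)
        assume "(k, Suc k) \<in> adj zs" then show False using zpair by blast
      next
        assume "(k, Suc k) = (n, 1)" then show False using n2 by simp
      next
        assume h: "Suc k = n \<and> us \<noteq> [] \<and> k = last us"
        then have "(k, 1) \<in> adj zs" using uv(1) by (simp add: adj_append)
        then show False using zpair h m1 by auto
      qed
    qed
    ultimately have "G w \<in> T" by (auto simp: T_def d_n1_iff)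
    moreover have "F (G w) = w"
    proof -
      have "filter (\<lambda>x. x \<noteq> n) us = us" "filter (\<lambda>x. x \<noteq> n) vs = vs"
        using nz uv(1) by (auto intro: filter_True)
      then have "filter (\<lambda>x. x \<noteq> n) (G w) = zs" using Gw uv(1) n2 by simp
      then have "F (G w) = map (fm m c) (map (gm m c) w)" by (simp add: F_def zs_def)
      also have "\<dots> = w" using wr fm_gm[OF c] by (simp add: map_idI)
      finally show ?thesis .
    qed
    ultimately show ?thesis by blast
  qed
  have "bij_betw F T (S (n - 2))"
    by (rule bij_betw_byWitness[where f' = G]) (use FT GS in auto)
  then show ?thesis by (simp add: bij_betw_same_card T_def)
qed


theorem lemma4p8:
  fixes n i :: nat
  assumes "n \<ge> 2" and "i \<in> {1..n}"
    and "{xs \<in> d_n1 n. hd xs = i} \<noteq> {}"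
  shows "card {xs \<in> d_n1 n. hd xs = i} = Der (n - 2)"
  using reduction[OF assms] card_S by simp

end
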